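(* Let $n=2t$ be even, $V=V_n(q)$, and let $X$ be the set of all unordered pairs $\{U,W\}$ of $t$-dimensional subspaces of $V$ with $V=U\oplus W$. Fix a basis $e_1,\dots,e_n$ of $V$, put $U_0=\langle e_1,\dots,e_t\rangle$, $W_0=\langle e_{t+1},\dots,e_n\rangle$, and let $p$ be the linear map swapping $e_t$ and $e_{t+1}$ and fixing the other basis vectors. Let $\mathcal{O}_1$ be the graph on $X$ whose edge set is the orbit under $\mathrm{P\Gamma L}_n(q)$ of the edge $\{\{U_0,W_0\},\{U_0p,W_0p\}\}$, and let $d$ denote distance in $\mathcal{O}_1$. For $A=\{U_1,W_1\}$ and $B=\{U_2,W_2\}$ in $X$ define $\dim(A,B)=\max\{\dim(U_1\cap W_2),\dim(U_1\cap U_2),\dim(U_2\cap W_1),\dim(W_1\cap W_2)\}$. Then $d(A,B)\ge t-\dim(A,B)$ for all $A,B\in X$. *)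

theory Defs
  imports "HOL-Analysis.Analysis" "HOL-Library.Extended_Nat"
begin

text \<open>V = V_n(q) is modelled as 'a^'n for a finite field 'a (q = CARD('a)) and a
finite index type 'n with n = CARD('n). Subspaces are vec.subspace, dimension vec.dim.\<close>

definition field_aut :: "('a::field \<Rightarrow> 'a) \<Rightarrow> bool" where
  "field_aut \<sigma> \<longleftrightarrow> bij \<sigma> \<and> (\<forall>x y. \<sigma> (x + y) = \<sigma> x + \<sigma> y) \<and> (\<forall>x y. \<sigma> (x * y) = \<sigma> x * \<sigma> y)"

text \<open>Semilinear bijections of V, i.e. elements of \<Gamma>L_n(q); P\<Gamma>L_n(q) acts on
subspaces through them.\<close>
definition semilinear_bij :: "('a::field^'n \<Rightarrow> 'a^'n) \<Rightarrow> bool" where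
  "semilinear_bij g \<longleftrightarrow> bij g \<and> (\<forall>v w. g (v + w) = g v + g w) \<and>
     (\<exists>\<sigma>. field_aut \<sigma> \<and> (\<forall>c v. g (c *s v) = \<sigma> c *s g v))"

definition act_pair :: "('a^'n \<Rightarrow> 'a^'n) \<Rightarrow> ('a^'n) set set \<Rightarrow> ('a^'n) set set" where
  "act_pair g A = (\<lambda>U. g ` U) ` A"

definition decomp_pairs :: "nat \<Rightarrow> ('a::field^'n) set set set" where
  "decomp_pairs t = {{U, W} | U W. vec.subspace U \<and> vec.subspace W \<and>
      vec.dim U = t \<and> vec.dim W = t \<and> U \<inter> W = {0} \<and> {u + w | u w. u \<in> U \<and> w \<in> W} = UNIV}"

text \<open>Basis e_1..e_n: the standard basis enumerated by a bijection e :: {1..n} \<rightarrow> 'n.\<close>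
definition bvec :: "(nat \<Rightarrow> 'n) \<Rightarrow> nat \<Rightarrow> 'a::field^'n::finite" where
  "bvec e i = axis (e i) 1"

definition U0 :: "(nat \<Rightarrow> 'n) \<Rightarrow> nat \<Rightarrow> ('a::field^'n::finite) set" where
  "U0 e t = vec.span (bvec e ` {1..t})"

definition W0 :: "(nat \<Rightarrow> 'n) \<Rightarrow> nat \<Rightarrow> ('a::field^'n::finite) set" where
  "W0 e t = vec.span (bvec e ` {t+1..2*t})"

definition swap_map :: "(nat \<Rightarrow> 'n) \<Rightarrow> nat \<Rightarrow> 'a::field^'n::finite \<Rightarrow> 'a^'n" where
  "swap_map e t v = (\<chi> j. v $ (Transposition.transpose (e t) (e (t+1)) j))"

definition O1_edge :: "(nat \<Rightarrow> 'n) \<Rightarrow> nat \<Rightarrow> ('a::field^'n::finite) set set \<Rightarrow> ('a^'n) set set \<Rightarrow> bool" where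
  "O1_edge e t A B \<longleftrightarrow> A \<in> decomp_pairs t \<and> B \<in> decomp_pairs t \<and>
     (\<exists>g. semilinear_bij g \<and>
        {act_pair g {U0 e t, W0 e t}, act_pair g {swap_map e t ` U0 e t, swap_map e t ` W0 e t}} = {A, B})"

definition graph_dist :: "('v \<Rightarrow> 'v \<Rightarrow> bool) \<Rightarrow> 'v \<Rightarrow> 'v \<Rightarrow> enat" where
  "graph_dist E x y = (INF k \<in> {k. \<exists>f. f 0 = x \<and> f k = y \<and> (\<forall>i<k. E (f i) (f (Suc i)))}. enat k)"

definition dim_pair :: "('a::field^'n::finite) set set \<Rightarrow> ('a^'n) set set \<Rightarrow> nat" where
  "dim_pair A B = Max {vec.dim (U \<inter> W) | U W. U \<in> A \<and> W \<in> B}"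

end

theory Submission imports Defs begin

lemma semilinear_zero: "semilinear_bij g \<Longrightarrow> g 0 = 0"
  unfolding semilinear_bij_def by (metis add_cancel_right_right add.right_neutral)

lemma semilinear_sum:
  assumes "semilinear_bij g" shows "g (sum f S) = (\<Sum>x\<in>S. g (f x))"
proof (induction S rule: infinite_finite_induct)
  case (infinite A) then show ?case using semilinear_zero[OF assms] by simp
next
  case empty then show ?case using semilinear_zero[OF assms] by simp
next
  case (insert x F) then show ?case using assms unfolding semilinear_bij_def by simp
qed

lemma field_aut_zero: "field_aut \<sigma> \<Longrightarrow> \<sigma> 0 = 0"
  unfolding field_aut_def by (metis add_cancel_right_right add.right_neutral)

lemma semilinear_indep:
  assumes g: "semilinear_bij g" and E: "vec.independent E"
  shows "vec.independent (g ` E)"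
proof -
  obtain \<sigma> where s: "field_aut \<sigma>" and gs: "\<And>c v. g (c *s v) = \<sigma> c *s g v"
    using g unfolding semilinear_bij_def by blast
  have injg: "inj g" using g unfolding semilinear_bij_def bij_def by blast
  have bs: "bij \<sigma>" using s unfolding field_aut_def by blast
  show ?thesis unfolding vec.independent_explicit_finite_subsets
  proof (intro allI impI ballI)
    fix S u v assume S: "S \<subseteq> g ` E" and fS: "finite S" and su: "(\<Sum>v\<in>S. u v *s v) = 0" and v: "v \<in> S"
    define S' where "S' = {x\<in>E. g x \<in> S}"
    have SS': "S = g ` S'" using S unfolding S'_def by auto
    have fS': "finite S'" using fS SS' injg by (metis finite_imageD inj_on_subset subset_UNIV)
    define d where "d x = inv \<sigma> (u (g x))" for x
    have sd: "\<sigma> (d x) = u (g x)" for x unfolding d_def using bs by (simp add: bij_is_surj surj_f_inv_f)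
    have "(\<Sum>v\<in>S. u v *s v) = (\<Sum>x\<in>S'. u (g x) *s g x)"
      unfolding SS' by (rule sum.reindex_cong[where l=g]) (use injg in \<open>auto intro: inj_on_subset\<close>)
    also have "\<dots> = (\<Sum>x\<in>S'. g (d x *s x))" by (simp add: gs sd)
    also have "\<dots> = g (\<Sum>x\<in>S'. d x *s x)" by (simp add: semilinear_sum[OF g])
    finally have "g (\<Sum>x\<in>S'. d x *s x) = g 0" using su semilinear_zero[OF g] by simp
    hence z: "(\<Sum>x\<in>S'. d x *s x) = 0" using injg by (meson injD)
    have "S' \<subseteq> E" unfolding S'_def by auto
    hence "\<forall>x\<in>S'. d x = 0" using E fS' z unfolding vec.independent_explicit_finite_subsets by blast
    moreover obtain x where "x \<in> S'" "v = g x" using v SS' by auto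
    ultimately show "u v = 0" using sd field_aut_zero[OF s] by metis
  qed
qed

lemma semilinear_card_le_dim:
  assumes g: "semilinear_bij g" and E: "vec.independent E" and ES: "E \<subseteq> S" and ET: "E \<subseteq> T"
  shows "card E \<le> vec.dim (g ` S \<inter> g ` T)"
proof -
  have injg: "inj g" using g unfolding semilinear_bij_def bij_def by blast
  have "card (g ` E) \<le> vec.dim (g ` S \<inter> g ` T)"
    by (rule vec.independent_card_le_dim) (use ES ET semilinear_indep[OF g E] in auto)
  moreover have "card (g ` E) = card E" using injg by (meson card_image inj_on_subset subset_UNIV)
  ultimately show ?thesis by simp
qed

lemma dim_step:
  assumes U: "vec.subspace U" and U': "vec.subspace (U'::('a::field^'n) set)" and Y: "vec.subspace Y"
    and k: "t - 1 \<le> vec.dim (U \<inter> U')" and d: "vec.dim U' = t"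
  shows "vec.dim (U' \<inter> Y) \<le> vec.dim (U \<inter> Y) + 1"
proof -
  define S where "S = U \<inter> U'"
  define T where "T = U' \<inter> Y"
  have s1: "vec.subspace S" unfolding S_def by (rule vec.subspace_inter[OF U U'])
  have s2: "vec.subspace T" unfolding T_def by (rule vec.subspace_inter[OF U' Y])
  have e: "vec.dim {x + y |x y. x \<in> S \<and> y \<in> T} + vec.dim (S \<inter> T) = vec.dim S + vec.dim T"
    by (rule vec.dim_sums_Int[OF s1 s2])
  have sub: "{x + y |x y. x \<in> S \<and> y \<in> T} \<subseteq> U'"
  proof
    fix z assume "z \<in> {x + y |x y. x \<in> S \<and> y \<in> T}"
    then obtain x y where "z = x + y" "x \<in> U'" "y \<in> U'" unfolding S_def T_def by blast
    thus "z \<in> U'" using vec.subspace_add[OF U'] by simp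
  qed
  have l1: "vec.dim {x + y |x y. x \<in> S \<and> y \<in> T} \<le> t"
    using vec.dim_subset[OF sub] d by simp
  have l2: "vec.dim (S \<inter> T) \<le> vec.dim (U \<inter> Y)"
    by (rule vec.dim_subset) (auto simp: S_def T_def)
  have k': "t - 1 \<le> vec.dim S" using k unfolding S_def .
  from e l1 l2 k' show ?thesis unfolding T_def[symmetric] by linarith
qed

lemma decomp_obtain:
  assumes "A \<in> decomp_pairs t"
  obtains U W where "A = {U, W}" "vec.subspace U" "vec.subspace W" "vec.dim U = t" "vec.dim W = t"
proof -
  from assms[unfolded decomp_pairs_def mem_Collect_eq] obtain U W where
    "A = {U, W}" "vec.subspace U" "vec.subspace W" "vec.dim U = t" "vec.dim W = t" by blast
  thus ?thesis using that by blast
qed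

lemma decomp_comp:
  assumes "A \<in> decomp_pairs t" "X \<in> A" shows "vec.subspace X" "vec.dim X = t"
proof -
  obtain U W where "A = {U, W}" "vec.subspace U" "vec.subspace W" "vec.dim U = t" "vec.dim W = t"
    by (rule decomp_obtain[OF assms(1)])
  then show "vec.subspace X" "vec.dim X = t" using assms(2) by auto
qed

lemma decomp_finite: "A \<in> decomp_pairs t \<Longrightarrow> finite A"
  by (erule decomp_obtain) simp

lemma decomp_nonempty: "A \<in> decomp_pairs t \<Longrightarrow> A \<noteq> {}"
  by (erule decomp_obtain) simp

lemma swap_fix:
  assumes basis: "bij_betw e {1..2*t} (UNIV :: 'n::finite set)" and i: "i \<in> {1..2*t}" "i \<noteq> t" "i \<noteq> t+1"
    and t: "t \<ge> 1"
  shows "swap_map e t (bvec e i :: 'a::field^'n) = bvec e i"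
proof -
  have inj: "inj_on e {1..2*t}" using basis bij_betw_def by blast
  have "e i \<noteq> e t" "e i \<noteq> e (t+1)" using inj i t by (auto dest: inj_onD)
  thus ?thesis unfolding swap_map_def bvec_def
    by (auto simp: vec_eq_iff axis_def transpose_eq_iff)
qed

lemma bvec_indep: "vec.independent (bvec e ` I :: ('a::field^'n::finite) set)"
  by (rule vec.independent_mono[OF independent_cart_basis]) (auto simp: bvec_def cart_basis_def)

lemma bvec_card:
  assumes basis: "bij_betw e {1..2*t} (UNIV :: 'n::finite set)" and I: "I \<subseteq> {1..2*t}"
  shows "card (bvec e ` I :: ('a::field^'n) set) = card I"
proof -
  have inj: "inj_on e {1..2*t}" using basis bij_betw_def by blast
  have "inj_on (bvec e :: nat \<Rightarrow> 'a^'n) I"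
    using inj I unfolding inj_on_def bvec_def by (auto simp: axis_eq_axis)
  thus ?thesis by (rule card_image)
qed

lemma pair_partner:
  assumes basis: "bij_betw e {1..2*t} (UNIV :: 'n::finite set)" and g: "semilinear_bij g"
  shows "\<forall>X\<in>act_pair g {swap_map e t ` U0 e t, swap_map e t ` W0 e t}.
           \<exists>X'\<in>act_pair g {U0 e t, W0 e t}. t - 1 \<le> vec.dim (X' \<inter> (X :: ('a::field^'n) set))"
    and "\<forall>X\<in>act_pair g {U0 e t, W0 e t}.
           \<exists>X'\<in>act_pair g {swap_map e t ` U0 e t, swap_map e t ` W0 e t}. t - 1 \<le> vec.dim (X' \<inter> (X :: ('a::field^'n) set))"
proof -
  define E1 where "E1 = (bvec e ` {1..t-1} :: ('a^'n) set)"
  define E2 where "E2 = (bvec e ` {t+2..2*t} :: ('a^'n) set)"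
  have c1: "card E1 = t - 1" unfolding E1_def by (subst bvec_card[OF basis]) auto
  have c2: "card E2 = t - 1" unfolding E2_def by (subst bvec_card[OF basis]) auto
  have E1U: "E1 \<subseteq> U0 e t" unfolding E1_def U0_def by (rule order_trans[OF image_mono vec.span_superset]) auto
  have E2W: "E2 \<subseteq> W0 e t" unfolding E2_def W0_def by (rule order_trans[OF image_mono vec.span_superset]) auto
  have E1pU: "E1 \<subseteq> swap_map e t ` U0 e t"
  proof
    fix x assume "x \<in> E1"
    then obtain i where i: "i \<in> {1..t-1}" "x = bvec e i" unfolding E1_def by auto
    have "swap_map e t x = x" using i by (auto intro!: swap_fix[OF basis])
    thus "x \<in> swap_map e t ` U0 e t" using E1U \<open>x \<in> E1\<close> by (metis image_eqI subsetD)
  qed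
  have E2pW: "E2 \<subseteq> swap_map e t ` W0 e t"
  proof
    fix x assume "x \<in> E2"
    then obtain i where i: "i \<in> {t+2..2*t}" "x = bvec e i" unfolding E2_def by auto
    have "swap_map e t x = x" using i by (auto intro!: swap_fix[OF basis])
    thus "x \<in> swap_map e t ` W0 e t" using E2W \<open>x \<in> E2\<close> by (metis image_eqI subsetD)
  qed
  have d1: "t - 1 \<le> vec.dim (g ` U0 e t \<inter> g ` (swap_map e t ` U0 e t))"
    using semilinear_card_le_dim[OF g bvec_indep E1U[unfolded E1_def] E1pU[unfolded E1_def]] c1
    unfolding E1_def by simp
  have d2: "t - 1 \<le> vec.dim (g ` W0 e t \<inter> g ` (swap_map e t ` W0 e t))"
    using semilinear_card_le_dim[OF g bvec_indep E2W[unfolded E2_def] E2pW[unfolded E2_def]] c2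
    unfolding E2_def by simp
  show "\<forall>X\<in>act_pair g {swap_map e t ` U0 e t, swap_map e t ` W0 e t}.
           \<exists>X'\<in>act_pair g {U0 e t, W0 e t}. t - 1 \<le> vec.dim (X' \<inter> (X :: ('a::field^'n) set))"
    using d1 d2 unfolding act_pair_def by auto
  show "\<forall>X\<in>act_pair g {U0 e t, W0 e t}.
           \<exists>X'\<in>act_pair g {swap_map e t ` U0 e t, swap_map e t ` W0 e t}. t - 1 \<le> vec.dim (X' \<inter> (X :: ('a::field^'n) set))"
    using d1 d2 unfolding act_pair_def by (auto simp: Int_commute)
qed

lemma edge_partner:
  assumes basis: "bij_betw e {1..2*t} (UNIV :: 'n::finite set)" and E: "O1_edge e t A C"
  shows "\<forall>X\<in>C. \<exists>X'\<in>A. t - 1 \<le> vec.dim (X' \<inter> (X :: ('a::field^'n) set))"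
proof -
  obtain g where g: "semilinear_bij g" and eq: "{act_pair g {U0 e t, W0 e t}, act_pair g {swap_map e t ` U0 e t, swap_map e t ` W0 e t}} = {A, C}"
    using E unfolding O1_edge_def by blast
  show ?thesis using eq pair_partner[OF basis g] by (auto simp: doubleton_eq_iff)
qed

lemma dim_pair_fin: "A \<in> decomp_pairs t \<Longrightarrow> B \<in> decomp_pairs t \<Longrightarrow>
   finite {vec.dim (U \<inter> W) |U W. U \<in> A \<and> W \<in> (B :: ('a::field^'n::finite) set set)}"
proof -
  assume a: "A \<in> decomp_pairs t" "B \<in> decomp_pairs t"
  have sub: "{vec.dim (U \<inter> W) |U W. U \<in> A \<and> W \<in> B} \<subseteq> (\<lambda>p. vec.dim (fst p \<inter> snd p)) ` (A \<times> B)"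
  proof
    fix x assume "x \<in> {vec.dim (U \<inter> W) |U W. U \<in> A \<and> W \<in> B}"
    then obtain U W where "x = vec.dim (U \<inter> W)" "U \<in> A" "W \<in> B" by blast
    thus "x \<in> (\<lambda>p. vec.dim (fst p \<inter> snd p)) ` (A \<times> B)" by (intro image_eqI[where x="(U,W)"]) simp_all
  qed
  have "finite (A \<times> B)" using decomp_finite[OF a(1)] decomp_finite[OF a(2)] by (rule finite_cartesian_product)
  thus ?thesis by (rule finite_subset[OF sub finite_imageI])
qed

lemma dim_pair_ge: "A \<in> decomp_pairs t \<Longrightarrow> B \<in> decomp_pairs t \<Longrightarrow> U \<in> A \<Longrightarrow> W \<in> B \<Longrightarrow>
   vec.dim (U \<inter> W) \<le> dim_pair A (B :: ('a::field^'n::finite) set set)"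
proof -
  assume a: "A \<in> decomp_pairs t" "B \<in> decomp_pairs t" "U \<in> A" "W \<in> B"
  have "vec.dim (U \<inter> W) \<in> {vec.dim (U \<inter> W) |U W. U \<in> A \<and> W \<in> B}" using a(3,4) by blast
  thus ?thesis unfolding dim_pair_def by (rule Max_ge[OF dim_pair_fin[OF a(1,2)]])
qed

lemma dim_pair_obtain:
  assumes "A \<in> decomp_pairs t" "B \<in> decomp_pairs t"
  obtains U W where "U \<in> A" "W \<in> B" "dim_pair A (B :: ('a::field^'n::finite) set set) = vec.dim (U \<inter> W)"
proof -
  have "dim_pair A B \<in> {vec.dim (U \<inter> W) |U W. U \<in> A \<and> W \<in> B}"
  proof -
    obtain U where "U \<in> A" using decomp_nonempty[OF assms(1)] by blast
    moreover obtain W where "W \<in> B" using decomp_nonempty[OF assms(2)] by blast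
    ultimately have "{vec.dim (U \<inter> W) |U W. U \<in> A \<and> W \<in> B} \<noteq> {}" by blast
    thus ?thesis unfolding dim_pair_def by (rule Max_in[OF dim_pair_fin[OF assms]])
  qed
  thus ?thesis using that by blast
qed

lemma edge_step:
  assumes basis: "bij_betw e {1..2*t} (UNIV :: 'n::finite set)" and E: "O1_edge e t A C"
    and B: "B \<in> decomp_pairs t"
  shows "dim_pair C B \<le> dim_pair A (B :: ('a::field^'n) set set) + 1"
proof -
  have A: "A \<in> decomp_pairs t" and C: "C \<in> decomp_pairs t" using E unfolding O1_edge_def by auto
  obtain X Y where XY: "X \<in> C" "Y \<in> B" "dim_pair C B = vec.dim (X \<inter> Y)" by (rule dim_pair_obtain[OF C B])
  obtain X' where X': "X' \<in> A" "t - 1 \<le> vec.dim (X' \<inter> X)" using edge_partner[OF basis E] XY by blast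
  have "vec.dim (X \<inter> Y) \<le> vec.dim (X' \<inter> Y) + 1"
    by (rule dim_step[OF decomp_comp(1)[OF A X'(1)] decomp_comp(1)[OF C XY(1)] decomp_comp(1)[OF B XY(2)] X'(2) decomp_comp(2)[OF C XY(1)]])
  moreover have "vec.dim (X' \<inter> Y) \<le> dim_pair A B" by (rule dim_pair_ge[OF A B X'(1) XY(2)])
  ultimately show ?thesis using XY by linarith
qed

lemma dim_pair_self: "B \<in> decomp_pairs t \<Longrightarrow> t \<le> dim_pair B B"
proof -
  assume B: "B \<in> decomp_pairs t"
  obtain U where U: "U \<in> B" using decomp_nonempty[OF B] by blast
  have "vec.dim (U \<inter> U) \<le> dim_pair B B" by (rule dim_pair_ge[OF B B U U])
  thus ?thesis using decomp_comp(2)[OF B U] by simp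
qed

theorem lemma3p5:
  fixes t :: nat and e :: "nat \<Rightarrow> 'n::finite"
  assumes n_even: "CARD('n) = 2 * t"
    and basis: "bij_betw e {1..2*t} (UNIV :: 'n set)"
    and A: "A \<in> (decomp_pairs t :: ('a::{field,finite}^'n) set set set)"
    and B: "B \<in> decomp_pairs t"
  shows "graph_dist (O1_edge e t) A B \<ge> enat (t - dim_pair A B)"
proof -
  have "enat (t - dim_pair A B) \<le> enat k"
    if f: "f 0 = A" "f k = B" "\<forall>i<k. O1_edge e t (f i) (f (Suc i))" for k f
  proof -
    have "t \<le> dim_pair (f (k - j)) B + j" if "j \<le> k" for j
      using that
    proof (induction j)
      case 0 then show ?case using dim_pair_self[OF B] f by simp
    next
      case (Suc j)
      have ed: "O1_edge e t (f (k - Suc j)) (f (Suc (k - Suc j)))" using f Suc.prems by simp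
      have "Suc (k - Suc j) = k - j" using Suc.prems by simp
      hence "dim_pair (f (k - j)) B \<le> dim_pair (f (k - Suc j)) B + 1"
        using edge_step[OF basis ed B] by simp
      thus ?case using Suc by simp
    qed
    from this[of k] f show ?thesis by simp
  qed
  thus ?thesis unfolding graph_dist_def by (auto intro!: INF_greatest)
qed

end
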